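(* Let $m>0$ and $a_1,a_2\in(-\infty,4m^2)$. For every $b_2\in\mathbb{R}$ there exist $b_0,b_1\in\mathbb{R}$ such that the equation $$\gamma(a_1-\gamma)(a_2-\gamma)J(\gamma)=b_0+b_1\gamma+b_2\gamma^2$$ admits three distinct real solutions $\gamma_0,\gamma_1,\gamma_2\in(-\infty,4m^2)$.
   Context: $\rho(M)=\frac{1}{16\pi^2}\sqrt{1-\frac{4m^2}{M}}\frac1M$ for $M\ge4m^2$, and $J(\gamma)=\int_{4m^2}^\infty\frac{\rho(M)}{M-\gamma}dM$ for $\gamma<4m^2$. *)

theory Defs
  imports "HOL-Analysis.Analysis"
begin

definition rho :: "real \<Rightarrow> real \<Rightarrow> real" where
  "rho m M = 1 / (16 * pi^2) * sqrt (1 - 4 * m^2 / M) * (1 / M)"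

definition J :: "real \<Rightarrow> real \<Rightarrow> real" where
  "J m \<gamma> = (LBINT M:{4 * m^2..}. rho m M / (M - \<gamma>))"

end

theory Submission
  imports Defs "HOL-Real_Asymp.Real_Asymp"
begin



lemma J_sub:
  fixes m \<gamma> :: real
  assumes m: "m > 0" and g: "\<gamma> \<le> 4 * m^2"
  and int: "set_integrable lborel (einterval 0 1) (\<lambda>v. v^2/(8 * pi^2 * (4 * m^2-\<gamma>+\<gamma> * v^2)))"
  shows "J m \<gamma> = (LBINT v=0..1. v^2/(8 * pi^2 * (4 * m^2-\<gamma>+\<gamma> * v^2)))"
proof -
  define s where "s = 4 * m^2"
  have s: "s > 0" using m by (simp add: s_def)
  define f where "f = (\<lambda>M. rho m M / (M - \<gamma>))"
  define g where "g = (\<lambda>v::real. s/(1-v^2))"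
  define g' where "g' = (\<lambda>v::real. 2 * s * v / (1-v^2)^2)"
  have eq: "f (g v) * g' v = v^2/(8 * pi^2 * (4 * m^2-\<gamma>+\<gamma> * v^2))" if "0<v" "v<1" for v
  proof -
    have v2: "v^2 < 1" using that by (simp add: power_less_one_iff)
    have d: "1 - v^2 > 0" using v2 by simp
    have gv: "g v > s" using d s that unfolding g_def by (simp add: field_simps)
    have sq: "sqrt (1 - 4 * m^2/g v) = v" unfolding g_def s_def[symmetric] using d s that
      by (simp add: field_simps)
    have pos: "s - \<gamma> + \<gamma> * v^2 > 0"
    proof -
      have "s - \<gamma> + \<gamma> * v^2 = s * v^2 + (s-\<gamma>) * (1-v^2)" by (simp add: algebra_simps)
      moreover have "s * v^2 > 0" using s that by simp
      moreover have "(s-\<gamma>) * (1-v^2) \<ge> 0" using d g s_def by simp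
      ultimately show ?thesis by linarith
    qed
    have "g v - \<gamma> = (s - \<gamma> + \<gamma> * v^2)/(1-v^2)" unfolding g_def using d by (simp add: field_simps)
    then have fg: "f (g v) = v * (1-v^2)^2/(16 * pi^2 * s * (s-\<gamma>+\<gamma> * v^2))"
      unfolding f_def rho_def sq using d pos s
      by (simp add: g_def field_simps power2_eq_square)
    have "f (g v) * g' v = v * (1-v^2)^2/(16 * pi^2 * s * (s-\<gamma>+\<gamma> * v^2)) * (2 * s * v / (1-v^2)^2)"
      unfolding fg g'_def ..
    also have "\<dots> = v^2/(8 * pi^2 * (s-\<gamma>+\<gamma> * v^2))"
    proof -
      have * : "\<And>w D::real. w \<noteq> 0 \<Longrightarrow> D \<noteq> 0 \<Longrightarrow> v * w^2/(16 * pi^2 * s * D) * (2 * s * v / w^2) = v^2/(8 * pi^2 * D)"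
        using s by (simp add: field_simps power2_eq_square)
      show ?thesis using d pos by (intro *) auto
    qed
    finally show ?thesis by (simp add: s_def)
  qed
  have d1: "DERIV g x :> g' x" if "0 < x" "x < 1" for x
  proof -
    have "x^2 < 1" using that by (simp add: power_less_one_iff)
    then have ne: "1 - x^2 \<noteq> 0" by simp
    show ?thesis unfolding g_def g'_def
      using ne by (auto intro!: derivative_eq_intros simp: field_simps power2_eq_square)
  qed
  have c1: "isCont f (g x)" if "0 < x" "x < 1" for x
  proof -
    have "x^2 < 1" using that by (simp add: power_less_one_iff)
    then have gx: "g x > s" using s that unfolding g_def by (simp add: field_simps)
    have "g x - \<gamma> > 0" using gx g s_def by simp
    then show ?thesis unfolding f_def rho_def using gx s
      by (intro continuous_intros) auto
  qed
  have c2: "isCont g' x" if "0 < x" "x < 1" for x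
  proof -
    have "x^2 < 1" using that by (simp add: power_less_one_iff)
    then have ne: "1 - x^2 \<noteq> 0" by simp
    show ?thesis unfolding g'_def using ne by (intro continuous_intros) auto
  qed
  have n1: "0 \<le> f (g x)" if "0 < x" "x < 1" for x
  proof -
    have "x^2 < 1" using that by (simp add: power_less_one_iff)
    then have gx: "g x > s" using s that unfolding g_def by (simp add: field_simps)
    have "g x - \<gamma> > 0" using gx g s_def by simp
    then show ?thesis unfolding f_def rho_def using gx s \<open>s > 0\<close> less_trans[OF s gx] by (intro divide_nonneg_nonneg mult_nonneg_nonneg) (use s_def in \<open>auto simp: divide_le_eq_1\<close>)
  qed
  have n2: "0 \<le> g' x" if "0 \<le> x" "x \<le> 1" for x
    unfolding g'_def using that s by simp
  have l1: "((ereal \<circ> g \<circ> real_of_ereal) \<longlongrightarrow> ereal s) (at_right 0)"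
  proof -
    have "(g \<longlongrightarrow> s) (at_right 0)"
      unfolding g_def by (auto intro!: tendsto_eq_intros)
    then show ?thesis by (simp add: zero_ereal_def ereal_tendsto_simps)
  qed
  have l2: "((ereal \<circ> g \<circ> real_of_ereal) \<longlongrightarrow> \<infinity>) (at_left 1)"
  proof -
    have a: "LIM (x::real) at_left 1. 1/(1-x^2) :> at_top"
    proof -
      have "((\<lambda>x::real. 1 - x^2) \<longlongrightarrow> 0) (at_left 1)"
        by (auto intro!: tendsto_eq_intros)
      moreover have "eventually (\<lambda>x::real. 0 < 1 - x^2) (at_left 1)"
        by (rule eventually_mono[OF eventually_at_left_real[of 0 1]]) (auto simp: power_less_one_iff)
      ultimately have "LIM (x::real) at_left 1. inverse (1 - x^2) :> at_top"
        by (rule filterlim_inverse_at_top)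
      then show ?thesis by (simp add: inverse_eq_divide)
    qed
    have "LIM x at_left 1. s * (1/(1-x^2)) :> at_top"
      by (rule filterlim_tendsto_pos_mult_at_top[OF tendsto_const s a])
    then have "filterlim g at_top (at_left 1)" unfolding g_def by simp
    then show ?thesis by (simp add: one_ereal_def ereal_tendsto_simps)
  qed
  have i1: "set_integrable lborel (einterval 0 1) (\<lambda>x. f (g x) * g' x)"
    using int by (subst set_integrable_cong[OF refl refl, where f' = "\<lambda>v. v^2/(8 * pi^2 * (4 * m^2-\<gamma>+\<gamma> * v^2))"])
      (auto simp: einterval_iff eq)
  have sub: "(LBINT x=ereal s..\<infinity>. f x) = (LBINT x=0..1. f (g x) * g' x)"
    by (rule interval_integral_substitution_nonneg(2)[of 0 1 g g' f "ereal s" \<infinity>])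
      (use d1 c1 c2 n1 n2 l1 l2 i1 in \<open>auto simp: zero_ereal_def one_ereal_def\<close>)
  have fm: "f \<in> borel_measurable lborel" unfolding f_def rho_def by measurable
  have "J m \<gamma> = (LBINT x:{s..}. f x)" unfolding J_def f_def s_def ..
  also have "\<dots> = (LBINT x:{s<..}. f x)"
    by (rule set_integral_cong_set[symmetric])
      (use fm in \<open>auto simp: set_borel_measurable_def intro!: eventually_mono[OF AE_lborel_singleton[of s]]\<close>)
  also have "\<dots> = (LBINT x=ereal s..\<infinity>. f x)" by (simp add: interval_integral_Ioi)
  also have "\<dots> = (LBINT x=0..1. f (g x) * g' x)" by (rule sub)
  also have "\<dots> = (LBINT v=0..1. v^2/(8 * pi^2 * (4 * m^2-\<gamma>+\<gamma> * v^2)))"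
    by (rule interval_integral_cong) (auto simp: einterval_iff eq)
  finally show ?thesis .
qed


definition kk :: "real \<Rightarrow> real \<Rightarrow> real \<Rightarrow> real" where
  "kk s \<gamma> v = v^2 / (s - \<gamma> + \<gamma> * v^2)"

lemma den_pos:
  fixes s \<gamma> v :: real
  assumes "s > 0" "\<gamma> < s" "0 \<le> v" "v \<le> 1"
  shows "s - \<gamma> + \<gamma> * v^2 > 0"
proof -
  have e: "s - \<gamma> + \<gamma> * v^2 = s * v^2 + (s - \<gamma>) * (1 - v^2)" by (simp add: algebra_simps)
  have "v^2 \<le> 1" using assms by (simp add: power_le_one)
  show ?thesis
  proof (cases "v = 1")
    case True then show ?thesis using assms by simp
  next
    case False
    then have "v < 1" using assms by simp
    then have "v^2 < 1" using assms by (simp add: power_less_one_iff)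
    then have "(s - \<gamma>) * (1 - v^2) > 0" using assms by simp
    moreover have "s * v^2 \<ge> 0" using assms by simp
    ultimately show ?thesis unfolding e by linarith
  qed
qed

lemma J_K:
  fixes m \<gamma> :: real
  assumes m: "m > 0" and g: "\<gamma> < 4 * m^2"
  shows "J m \<gamma> = integral {0..1} (kk (4 * m^2) \<gamma>) / (8 * pi^2)"
proof -
  define s where "s = 4 * m^2"
  have s: "s > 0" using m by (simp add: s_def)
  define hh where "hh = (\<lambda>v. v^2/(8 * pi^2 * (4 * m^2-\<gamma>+\<gamma> * v^2)))"
  have cont: "continuous_on {0..1} hh"
    unfolding hh_def s_def[symmetric]
    using den_pos[OF s g[folded s_def]] by (intro continuous_intros) force
  have si: "set_integrable lborel {0..1} hh" by (rule borel_integrable_atLeastAtMost'[OF cont])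
  have si': "set_integrable lborel (einterval 0 1) hh"
    by (rule set_integrable_subset[OF si]) (auto simp: einterval_iff)
  have "J m \<gamma> = (LBINT v=0..1. hh v)" unfolding hh_def
    by (rule J_sub[OF m]) (use g si' in \<open>auto simp: hh_def\<close>)
  also have "\<dots> = integral {0..1} hh"
    using interval_integral_eq_integral[of 0 1 hh] si by (simp add: zero_ereal_def one_ereal_def)
  also have "hh = (\<lambda>v. kk s \<gamma> v / (8 * pi^2))" unfolding hh_def kk_def s_def by (auto simp: field_simps)
  also have "integral {0..1} \<dots> = integral {0..1} (kk s \<gamma>) / (8 * pi^2)"
  proof -
    have "kk s \<gamma> integrable_on {0..1}"
      unfolding kk_def using den_pos[OF s g[folded s_def]]
      by (intro integrable_continuous_real continuous_intros) force
    then show ?thesis by (intro integral_unique has_integral_divide) auto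
  qed
  finally show ?thesis by (simp add: s_def)
qed

lemma J_s:
  fixes m :: real
  assumes m: "m > 0"
  shows "J m (4 * m^2) = 1 / (8 * pi^2 * (4 * m^2))"
proof -
  define s where "s = 4 * m^2"
  have s: "s > 0" using m by (simp add: s_def)
  have eq: "v^2/(8 * pi^2 * (4 * m^2 - 4 * m^2 + 4 * m^2 * v^2)) = 1 / (8 * pi^2 * s)"
    if "v \<in> einterval 0 1" for v
    using that s by (auto simp: einterval_iff s_def)
  have si: "set_integrable lborel (einterval 0 1) (\<lambda>v. v^2/(8 * pi^2 * (4 * m^2 - 4 * m^2 + 4 * m^2 * v^2)))"
  proof -
    have "set_integrable lborel {0..1} (\<lambda>v::real. 1 / (8 * pi^2 * s))"
      by (rule borel_integrable_atLeastAtMost') (intro continuous_intros)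
    then have "set_integrable lborel (einterval 0 1) (\<lambda>v::real. 1 / (8 * pi^2 * s))"
      by (rule set_integrable_subset) (auto simp: einterval_iff)
    then show ?thesis using eq by (subst set_integrable_cong[OF refl refl]) auto
  qed
  have "J m (4 * m^2) = (LBINT v=0..1. v^2/(8 * pi^2 * (4 * m^2 - 4 * m^2 + 4 * m^2 * v^2)))"
    by (rule J_sub[OF m order_refl si])
  also have "\<dots> = (LBINT v=0..1. 1 / (8 * pi^2 * s))"
    by (rule interval_integral_cong) (use eq in auto)
  also have "\<dots> = 1 / (8 * pi^2 * s)"
    using interval_integral_const(2)[of 0 1 "1 / (8 * pi^2 * s)"] by (simp add: zero_ereal_def one_ereal_def)
  finally show ?thesis by (simp add: s_def)
qed

lemma K_closed:
  fixes s \<gamma> :: real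
  assumes g0: "0 < \<gamma>" and gs: "\<gamma> < s"
  shows "integral {0..1} (kk s \<gamma>) = (1 - arctan (sqrt (\<gamma>/(s-\<gamma>))) / sqrt (\<gamma>/(s-\<gamma>))) / \<gamma>"
proof -
  define c where "c = sqrt (\<gamma>/(s-\<gamma>))"
  have c: "c > 0" using assms by (simp add: c_def)
  have c2: "c^2 = \<gamma>/(s-\<gamma>)" using assms by (simp add: c_def)
  define P where "P = (\<lambda>v. v/\<gamma> - arctan (c * v) / (\<gamma> * c))"
  have d: "(P has_vector_derivative kk s \<gamma> v) (at v within {0..1})" for v
  proof -
    have "(P has_real_derivative (1/\<gamma> - c / (1 + (c * v)^2) / (\<gamma> * c))) (at v)"
    proof -
      have pos: "1 + (c * v)^2 \<noteq> 0" by (metis add_pos_nonneg zero_le_power2 zero_less_one order_less_irrefl)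
      have A: "((\<lambda>v. arctan (c * v)) has_real_derivative (c / (1 + (c * v)^2))) (at v)"
        using pos by (auto intro!: derivative_eq_intros simp: divide_simps)
      show ?thesis unfolding P_def
        by (rule DERIV_diff[OF DERIV_cdivide[OF DERIV_ident] DERIV_cdivide[OF A]])
    qed
    moreover have "1/\<gamma> - c / (1 + (c * v)^2) / (\<gamma> * c) = kk s \<gamma> v"
    proof -
      define w where "w = c^2 * v^2"
      have w: "w \<ge> 0" unfolding w_def by simp
      have e1: "(c * v)^2 = w" unfolding w_def by (simp add: power_mult_distrib)
      have pw: "1 + w > 0" using w by simp
      have e2: "c / (1 + w) / (\<gamma> * c) = 1 / (\<gamma> * (1 + w))" using c pw g0 by (simp add: divide_simps ac_simps)
      have e3: "1/\<gamma> - 1 / (\<gamma> * (1 + w)) = w / (\<gamma> * (1 + w))" using g0 pw by (simp add: divide_simps)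
      have "1/\<gamma> - c / (1 + (c * v)^2) / (\<gamma> * c) = w / (\<gamma> * (1 + w))"
        by (simp only: e1 e2 e3)
      also have "\<dots> = c^2 * v^2 / (\<gamma> * (1 + c^2 * v^2))" unfolding w_def ..
      also have "\<dots> = kk s \<gamma> v"
      proof -
        have sg: "s - \<gamma> > 0" using gs by simp
        have D: "s - \<gamma> + \<gamma> * v^2 > 0" using sg g0 by (simp add: add_pos_nonneg)
        have e: "1 + \<gamma>/(s-\<gamma>) * v^2 = (s - \<gamma> + \<gamma> * v^2)/(s-\<gamma>)"
          using sg by (simp add: divide_simps)
        show ?thesis unfolding c2 kk_def e using sg D g0 by (simp add: divide_simps)
      qed
      finally show ?thesis .
    qed
    ultimately show ?thesis
      by (simp add: has_real_derivative_iff_has_vector_derivative has_vector_derivative_at_within)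
  qed
  have "(kk s \<gamma> has_integral (P 1 - P 0)) {0..1}"
    by (rule fundamental_theorem_of_calculus) (use d in auto)
  then have "integral {0..1} (kk s \<gamma>) = P 1 - P 0" by (rule integral_unique)
  also have "\<dots> = (1 - arctan c / c) / \<gamma>" unfolding P_def using c g0 by (simp add: field_simps)
  finally show ?thesis by (simp add: c_def)
qed



definition Fc :: "real \<Rightarrow> real \<Rightarrow> real \<Rightarrow> real \<Rightarrow> real" where
  "Fc s a1 a2 \<gamma> = (a1 - \<gamma>) * (a2 - \<gamma>) / (8 * pi^2) *
     (1 - sqrt ((s - \<gamma>)/\<gamma>) * (pi/2 - arctan (sqrt ((s - \<gamma>)/\<gamma>))))"

lemma F_eq:
  fixes m a1 a2 \<gamma> :: real
  assumes m: "m > 0" and g0: "0 < \<gamma>" and gs: "\<gamma> \<le> 4 * m^2"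
  shows "\<gamma> * (a1 - \<gamma>) * (a2 - \<gamma>) * J m \<gamma> = Fc (4 * m^2) a1 a2 \<gamma>"
proof (cases "\<gamma> = 4 * m^2")
  case True
  then show ?thesis using J_s[OF m] g0 by (simp add: Fc_def)
next
  case False
  define s where "s = 4 * m^2"
  have gs': "\<gamma> < s" using gs False s_def by simp
  define t where "t = sqrt ((s - \<gamma>)/\<gamma>)"
  have t: "t > 0" using gs' g0 by (simp add: t_def)
  have ct: "sqrt (\<gamma>/(s-\<gamma>)) = 1/t" unfolding t_def using gs' g0
    by (simp add: real_sqrt_divide)
  have at: "arctan (1/t) = pi/2 - arctan t" using arctan_inverse[of t] t by (metis inverse_eq_divide)
  have "J m \<gamma> = integral {0..1} (kk s \<gamma>) / (8 * pi^2)" using J_K[OF m] gs' s_def by simp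
  also have "\<dots> = (1 - t * (pi/2 - arctan t)) / \<gamma> / (8 * pi^2)"
    unfolding K_closed[OF g0 gs'] ct at using t by simp
  finally show ?thesis using g0 by (simp add: Fc_def s_def[symmetric] t_def[symmetric])
qed

lemma cont_J:
  fixes m :: real
  assumes m: "m > 0"
  shows "continuous_on {..<4 * m^2} (J m)"
proof -
  define s where "s = 4 * m^2"
  have s: "s > 0" using m by (simp add: s_def)
  have "continuous_on ({..<s} \<times> cbox 0 1) (\<lambda>x. (snd x)^2 / (s - fst x + fst x * (snd x)^2))"
  proof (intro continuous_intros ballI)
    fix x :: "real \<times> real" assume "x \<in> {..<s} \<times> cbox 0 1"
    then show "s - fst x + fst x * (snd x)^2 \<noteq> 0" using den_pos[OF s, of "fst x" "snd x"]
      by (auto simp: mem_Times_iff)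
  qed
  then have "continuous_on ({..<s} \<times> cbox 0 1) (\<lambda>(\<gamma>, v). kk s \<gamma> v)"
    unfolding kk_def by (simp add: split_beta')
  then have "continuous_on {..<s} (\<lambda>\<gamma>. integral (cbox 0 1) (kk s \<gamma>))"
    by (rule integral_continuous_on_param)
  then have "continuous_on {..<s} (\<lambda>\<gamma>. integral {0..1} (kk s \<gamma>) / (8 * pi^2))"
    by (intro continuous_intros) auto
  then show ?thesis
    by (rule continuous_on_cong[THEN iffD1, rotated 2]) (auto simp: J_K[OF m] s_def)
qed

lemma Klow:
  fixes s T :: real
  assumes s: "s > 0" and T: "T > 0"
  shows "integral {0..1} (kk s (-T)) \<ge> ln (1 + T/s) / (8 * T)"
proof -
  have int: "kk s (-T) integrable_on {a..b}" if "0 \<le> a" "b \<le> 1" for a b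
  proof -
    have "continuous_on {a..b} (kk s (-T))" unfolding kk_def
    proof (intro continuous_intros ballI)
      fix v assume "v \<in> {a..b}"
      then show "s - - T + - T * v^2 \<noteq> 0" using den_pos[OF s, of "-T" v] that T s by auto
    qed
    then show ?thesis by (rule integrable_continuous_real)
  qed
  define h where "h = (\<lambda>v::real. (1/4) / (s + 2 * T * (1 - v)))"
  define P where "P = (\<lambda>v::real. - ln (s + 2 * T * (1 - v)) / (8 * T))"
  have dP: "(P has_vector_derivative h v) (at v within {1/2..1})" if "v \<in> {1/2..1}" for v
  proof -
    have pos: "s + 2 * T * (1 - v) > 0" using that s T by (simp add: add_pos_nonneg)
    have "(P has_real_derivative h v) (at v)" unfolding P_def h_def using pos T
      by (auto intro!: derivative_eq_intros simp: divide_simps)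
    then show ?thesis
      by (simp add: has_real_derivative_iff_has_vector_derivative has_vector_derivative_at_within)
  qed
  have "(h has_integral (P 1 - P (1/2))) {1/2..1}"
    by (rule fundamental_theorem_of_calculus) (use dP in auto)
  then have hi: "h integrable_on {1/2..1}" and hv: "integral {1/2..1} h = P 1 - P (1/2)" by auto
  have "P 1 - P (1/2) = (ln (s + T) - ln s) / (8 * T)" unfolding P_def by (simp add: field_simps) (simp add: diff_divide_distrib)
  also have "\<dots> = ln (1 + T/s) / (8 * T)"
  proof -
    have "1 + T/s = (s+T)/s" using s by (simp add: field_simps)
    then show ?thesis using s T by (simp add: ln_div)
  qed
  finally have hv': "integral {1/2..1} h = ln (1 + T/s) / (8 * T)" using hv by simp
  have "integral {1/2..1} h \<le> integral {1/2..1} (kk s (-T))"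
  proof (rule integral_le[OF hi int])
    fix v :: real assume v: "v \<in> {1/2..1}"
    have d: "s + T - T * v^2 > 0" using den_pos[OF s, of "-T" v] v T s by simp
    have d2: "s + 2 * T * (1 - v) > 0" using v s T by (simp add: add_pos_nonneg)
    have le: "s + T - T * v^2 \<le> s + 2 * T * (1 - v)"
    proof -
      have "T * (1 - v^2) = T * (1 - v) * (1 + v)" by (simp add: algebra_simps power2_eq_square)
      also have "\<dots> \<le> T * (1 - v) * 2" using v T by (intro mult_left_mono) auto
      finally show ?thesis by (simp add: algebra_simps)
    qed
    have v2: "v^2 \<ge> 1/4" using v power_mono[of "1/2" v 2] by (simp add: power2_eq_square)
    have "h v = (1/4) / (s + 2 * T * (1 - v))" by (simp add: h_def)
    also have "\<dots> \<le> (1/4) / (s + T - T * v^2)" using d le by (intro divide_left_mono) auto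
    also have "\<dots> \<le> v^2 / (s + T - T * v^2)" using d v2 by (intro divide_right_mono) auto
    also have "\<dots> = kk s (-T) v" by (simp add: kk_def)
    finally show "h v \<le> kk s (-T) v" .
  qed (auto intro: int)
  also have "\<dots> \<le> integral {0..1} (kk s (-T))"
  proof (rule integral_subset_le)
    show "{1/2..1::real} \<subseteq> {0..1}" by auto
    show "kk s (-T) integrable_on {1/2..1}" by (rule int) auto
    show "kk s (-T) integrable_on {0..1}" by (rule int) auto
    show "\<forall>v\<in>{0..1}. 0 \<le> kk s (-T) v"
    proof
    fix v :: real assume v: "v \<in> {0..1}"
    show "0 \<le> kk s (-T) v" unfolding kk_def using den_pos[OF s, of "-T" v] v T s by simp
    qed
  qed
  finally show ?thesis using hv' by simp
qed



theorem proposition4p9: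
  fixes m a1 a2 :: real
  assumes "m > 0" and "a1 < 4 * m^2" and "a2 < 4 * m^2"
  shows "\<forall>b2::real. \<exists>b0 b1::real. \<exists>\<gamma>0 \<gamma>1 \<gamma>2::real.
           \<gamma>0 < 4 * m^2 \<and> \<gamma>1 < 4 * m^2 \<and> \<gamma>2 < 4 * m^2 \<and>
           \<gamma>0 \<noteq> \<gamma>1 \<and> \<gamma>0 \<noteq> \<gamma>2 \<and> \<gamma>1 \<noteq> \<gamma>2 \<and>
           (\<forall>\<gamma>\<in>{\<gamma>0, \<gamma>1, \<gamma>2}.
              \<gamma> * (a1 - \<gamma>) * (a2 - \<gamma>) * J m \<gamma> = b0 + b1 * \<gamma> + b2 * \<gamma>^2)"
proof
  fix b2 :: real
  note m = assms(1)
  define s where "s = 4 * m^2"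
  have s: "s > 0" using m by (simp add: s_def)
  have a1s: "a1 < s" and a2s: "a2 < s" using assms by (auto simp: s_def)
  define G where "G = (\<lambda>\<gamma>. \<gamma> * (a1 - \<gamma>) * (a2 - \<gamma>) * J m \<gamma> - b2 * \<gamma>^2)"
  define Q where "Q = (\<lambda>\<gamma>::real. (a1 - \<gamma>) * (a2 - \<gamma>) / (8 * pi^2))"
  define P where "P = (\<lambda>\<gamma>::real. Q \<gamma> - b2 * \<gamma>^2)"
  define \<alpha> where "\<alpha> = 1 / (8 * pi^2) - b2"
  have Qs: "Q s > 0" unfolding Q_def using a1s a2s by (simp add: mult_neg_neg)
  have GF: "G \<gamma> = Fc s a1 a2 \<gamma> - b2 * \<gamma>^2" if "0 < \<gamma>" "\<gamma> \<le> s" for \<gamma>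
    unfolding G_def using F_eq[OF m, of \<gamma> a1 a2] that by (simp add: s_def)
  \<comment> \<open>Step 1: a convex triple near the threshold\<close>
  define W where "W = (\<lambda>e::real. - 3 * \<alpha> * e^3
      - Q (s - e^2) * (pi/2 - arctan (e / sqrt (s - e^2))) / sqrt (s - e^2)
      + Q (s - 4 * e^2) * (pi/2 - arctan (2 * e / sqrt (s - 4 * e^2))) / (2 * sqrt (s - 4 * e^2)))"
  have W0: "W 0 < 0"
  proof -
    have "W 0 = - Q s * (pi/2) / sqrt s + Q s * (pi/2) / (2 * sqrt s)" by (simp add: W_def)
    also have "\<dots> = - Q s * pi / (4 * sqrt s)" by (simp add: field_simps)
    finally show ?thesis using Qs s by simp
  qed
  have Wc: "isCont W 0" unfolding W_def Q_def using s by (intro continuous_intros) auto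
  have "eventually (\<lambda>e. W e < 0) (at 0)"
    using order_tendstoD(2)[OF Wc[unfolded isCont_def] W0] .
  then have ev1: "eventually (\<lambda>e. W e < 0) (at_right 0)" by (simp add: eventually_at_split)
  have "eventually (\<lambda>e. W e < 0 \<and> e \<in> {0<..<sqrt s / 4}) (at_right 0)"
    using ev1 eventually_at_right_real[of 0 "sqrt s / 4"] s by (auto intro: eventually_conj)
  then obtain e where We: "W e < 0" and e0: "0 < e" and es: "e < sqrt s / 4"
    using eventually_happens'[OF trivial_limit_at_right_real] by auto
  have e2: "16 * e^2 < s"
  proof -
    have "(4 * e)^2 < (sqrt s)^2" using e0 es by (intro power_strict_mono) auto
    then show ?thesis using s by (simp add: power_mult_distrib)
  qed
  have e2b: "e^2 < s" "4 * e^2 < s" using e2 zero_le_power2[of e] by linarith+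
  define y where "y = s - 4 * e^2"
  define z where "z = s - e^2"
  have y0: "s / 2 < y" unfolding y_def using e2 zero_le_power2[of e] by linarith
  have yz: "y < z" using e0 by (simp add: y_def z_def)
  have zs: "z < s" using e0 by (simp add: z_def)
  define D where "D = G z - G y / 4 - 3 * G s / 4"
  have D: "D = e * W e"
  proof -
    define r1 where "r1 = sqrt (s - e^2)"
    define r2 where "r2 = sqrt (s - 4 * e^2)"
    have r1: "r1 > 0" using e2b unfolding r1_def by simp
    have r2: "r2 > 0" using e2b unfolding r2_def by simp
    define A where "A = pi/2 - arctan (e / r1)"
    define B where "B = pi/2 - arctan (2 * e / r2)"
    have tz: "sqrt ((s - z) / z) = e / r1" unfolding z_def r1_def using e0
      by (simp add: real_sqrt_divide)
    have ty: "sqrt ((s - y) / y) = 2 * e / r2"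
    proof -
      have "sqrt (4 * e^2) = 2 * e" using e0 by (simp add: real_sqrt_mult)
      then show ?thesis unfolding y_def r2_def by (simp add: real_sqrt_divide)
    qed
    have Fz: "Fc s a1 a2 z = Q z * (1 - e / r1 * A)" unfolding Fc_def Q_def tz A_def by simp
    have Fy: "Fc s a1 a2 y = Q y * (1 - 2 * e / r2 * B)" unfolding Fc_def Q_def ty B_def by simp
    have Fs: "Fc s a1 a2 s = Q s" unfolding Fc_def Q_def by simp
    have Gz: "G z = P z - Q z * (e / r1) * A"
      using GF[of z] yz zs y0 s unfolding Fz P_def by (simp add: algebra_simps)
    have Gy: "G y = P y - Q y * (2 * e / r2) * B"
      using GF[of y] yz zs y0 s unfolding Fy P_def by (simp add: algebra_simps)
    have Gs: "G s = P s"
      using GF[of s] s unfolding Fs P_def by simp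
    have Ppart: "P z - P y / 4 - 3 * P s / 4 = - 3 * \<alpha> * e^4"
      unfolding P_def Q_def \<alpha>_def y_def z_def by (simp add: field_simps power2_eq_square power4_eq_xxxx)
    have "D = (P z - P y / 4 - 3 * P s / 4) - Q z * e * A / r1 + Q y * e * B / (2 * r2)"
      unfolding D_def Gz Gy Gs using r1 r2 by (simp add: field_simps)
    also have "\<dots> = - 3 * \<alpha> * e^4 - Q z * e * A / r1 + Q y * e * B / (2 * r2)"
      by (simp only: Ppart)
    also have "\<dots> = e * W e"
      unfolding W_def A_def B_def r1_def r2_def z_def y_def
      by (simp add: algebra_simps power4_eq_xxxx power3_eq_cube)
    finally show ?thesis .
  qed
  have Dneg: "D < 0" using D We e0 by (simp add: mult_pos_neg)
  define \<delta> where "\<delta> = - D / 2"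
  define b1 where "b1 = (G s - G y) / (s - y)"
  define b0 where "b0 = G y - b1 * y - \<delta>"
  define H where "H = (\<lambda>\<gamma>. G \<gamma> - (b0 + b1 * \<gamma>))"
  have Hy: "H y > 0" unfolding H_def b0_def \<delta>_def using Dneg by simp
  have b1e: "b1 * (s - y) = G s - G y" using yz zs by (simp add: b1_def)
  have Hs: "H s > 0"
  proof -
    have "H s = \<delta>" unfolding H_def b0_def using b1e by (simp add: algebra_simps)
    then show ?thesis using Dneg by (simp add: \<delta>_def)
  qed
  have Hz: "H z < 0"
  proof -
    have "b1 * (z - y) = (G s - G y) * 3 / 4"
    proof -
      have "z - y = (s - y) * 3 / 4" by (simp add: y_def z_def)
      then have "b1 * (z - y) = b1 * (s - y) * 3 / 4" by simp
      then show ?thesis using b1e by simp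
    qed
    then have "H z = D + \<delta>" unfolding H_def b0_def D_def by (simp add: algebra_simps)
    then show ?thesis using Dneg by (simp add: \<delta>_def)
  qed
  have evT: "eventually (\<lambda>T::real. -(a1+T)*(a2+T)*(ln T - ln s)/(64*pi^2) - b2*T^2 - b0 + b1*T < 0) at_top"
    by real_asymp
  have "eventually (\<lambda>T::real. (-(a1+T)*(a2+T)*(ln T - ln s)/(64*pi^2) - b2*T^2 - b0 + b1*T < 0)
      \<and> T > \<bar>a1\<bar> + \<bar>a2\<bar> + \<bar>y\<bar> + 1) at_top"
    using evT eventually_gt_at_top by (rule eventually_conj)
  then obtain T where T1: "-(a1+T)*(a2+T)*(ln T - ln s)/(64*pi^2) - b2*T^2 - b0 + b1*T < 0"
    and T2: "T > \<bar>a1\<bar> + \<bar>a2\<bar> + \<bar>y\<bar> + 1"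
    using eventually_happens'[OF trivial_limit_at_top_linorder] by blast
  have T0: "T > 0" using T2 by simp
  define x where "x = - T"
  have xy: "x < y" using T2 by (simp add: x_def)
  have Hx: "H x < 0"
  proof -
    define X where "X = (a1 + T) * (a2 + T)"
    have X: "X > 0" unfolding X_def using T2 by (intro mult_pos_pos) auto
    have Jx: "J m (-T) = integral {0..1} (kk s (-T)) / (8 * pi^2)"
      using J_K[OF m, of "-T"] T0 s[unfolded s_def] unfolding s_def by linarith
    have K: "integral {0..1} (kk s (-T)) \<ge> ln (1 + T/s) / (8 * T)" by (rule Klow[OF s T0])
    have lnb: "ln T - ln s \<le> ln (1 + T/s)"
    proof -
      have "ln T - ln s = ln (T/s)" using T0 s by (simp add: ln_div)
      also have "\<dots> \<le> ln (1 + T/s)" using T0 s by (subst ln_le_cancel_iff) (auto simp: add_pos_pos)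
      finally show ?thesis .
    qed
    have "x * (a1 - x) * (a2 - x) * J m x = - (T * X) * integral {0..1} (kk s (-T)) / (8 * pi^2)"
      unfolding x_def Jx X_def by (simp add: field_simps)
    also have "\<dots> \<le> - (T * X) * (ln (1 + T/s) / (8 * T)) / (8 * pi^2)"
      using K X T0 by (intro divide_right_mono mult_left_mono_neg) auto
    also have "\<dots> = - X * ln (1 + T/s) / (64 * pi^2)" using T0 by (simp add: field_simps)
    also have "\<dots> \<le> - X * (ln T - ln s) / (64 * pi^2)"
      using lnb X by (intro divide_right_mono mult_left_mono_neg) auto
    finally have "x * (a1 - x) * (a2 - x) * J m x \<le> - X * (ln T - ln s) / (64 * pi^2)" .
    then have "H x \<le> -(a1+T)*(a2+T)*(ln T - ln s)/(64*pi^2) - b2*T^2 - b0 + b1*T"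
      unfolding H_def G_def X_def x_def by (simp add: algebra_simps)
    then show ?thesis using T1 by linarith
  qed
  have contG: "continuous_on {x..s} H"
  proof -
    have c1: "continuous_on {x..s/2} G"
    proof -
      have "continuous_on {x..s/2} (J m)"
        by (rule continuous_on_subset[OF cont_J[OF m]]) (use s in \<open>auto simp: s_def[symmetric]\<close>)
      then show ?thesis unfolding G_def by (intro continuous_intros)
    qed
    have c2: "continuous_on {s/2..s} G"
    proof -
      have "continuous_on {s/2..s} (\<lambda>\<gamma>. Fc s a1 a2 \<gamma> - b2 * \<gamma>^2)"
        unfolding Fc_def using s by (intro continuous_intros) auto
      then show ?thesis
        by (rule continuous_on_cong[THEN iffD1, rotated 2]) (use s GF in auto)
    qed
    have "{x..s/2} \<union> {s/2..s} = {x..s}" using T0 s by (auto simp: x_def)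
    then have "continuous_on {x..s} G" using continuous_on_closed_Un[OF closed_atLeastAtMost closed_atLeastAtMost c1 c2] by simp
    then show ?thesis unfolding H_def by (intro continuous_intros)
  qed
  obtain g0 where g0: "x \<le> g0" "g0 \<le> y" "H g0 = 0"
    using IVT'[of H x 0 y] Hx Hy xy continuous_on_subset[OF contG, of "{x..y}"] yz zs by auto
  obtain g1 where g1: "y \<le> g1" "g1 \<le> z" "H g1 = 0"
    using IVT2'[of H z 0 y] Hz Hy yz continuous_on_subset[OF contG, of "{y..z}"] xy zs by auto
  obtain g2 where g2: "z \<le> g2" "g2 \<le> s" "H g2 = 0"
    using IVT'[of H z 0 s] Hz Hs zs continuous_on_subset[OF contG, of "{z..s}"] xy yz by auto
  have o: "g0 < y" "y < g1" "g1 < z" "z < g2" "g2 < s"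
    using g0 g1 g2 Hy Hz Hs by (auto simp: order.order_iff_strict)
  have eqs: "\<gamma> * (a1 - \<gamma>) * (a2 - \<gamma>) * J m \<gamma> = b0 + b1 * \<gamma> + b2 * \<gamma>^2" if "H \<gamma> = 0" for \<gamma>
    using that unfolding H_def G_def by simp
  show "\<exists>b0 b1::real. \<exists>\<gamma>0 \<gamma>1 \<gamma>2::real.
           \<gamma>0 < 4 * m^2 \<and> \<gamma>1 < 4 * m^2 \<and> \<gamma>2 < 4 * m^2 \<and>
           \<gamma>0 \<noteq> \<gamma>1 \<and> \<gamma>0 \<noteq> \<gamma>2 \<and> \<gamma>1 \<noteq> \<gamma>2 \<and>
           (\<forall>\<gamma>\<in>{\<gamma>0, \<gamma>1, \<gamma>2}.
              \<gamma> * (a1 - \<gamma>) * (a2 - \<gamma>) * J m \<gamma> = b0 + b1 * \<gamma> + b2 * \<gamma>^2)"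
    apply (rule exI[of _ b0], rule exI[of _ b1], rule exI[of _ g0], rule exI[of _ g1], rule exI[of _ g2])
    using o eqs g0 g1 g2 unfolding s_def[symmetric] by auto
qed


end
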